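(* Let $G$ be a graph on $\Pi$ and $A$ the simple closed-above model generated by $G$. Let $i\in[1,n]$. If the $i$-th covering numbers sequence $(s^i_j)_{j\ge1}$ of $G$ satisfies $s^i_j=n$ for some $j$, then $i$-set agreement is solvable on $A$ (in finitely many rounds).
   Context: Fix $\Pi=\{p_1,\dots,p_n\}$. A graph is a directed graph on $\Pi$ containing all self-loops; $Out_G(p)=\{q:(p,q)\in E(G)\}$, $In_G(p)=\{q:(q,p)\in E(G)\}$, $Out_G(P)=\bigcup_{p\in P}Out_G(p)$. Computation proceeds in failure-free, communication-closed rounds: in round $r$ a graph $G_r$ is chosen and each $p$ receives the round-$r$ messages of the processes in $In_{G_r}(p)$. $\uparrow G=\{H:E(H)\supseteq E(G)\}$; the simple closed-above model generated by $G$ allows exactly the executions whose round graphs all lie in $\uparrow G$. In $k$-set agreement each process starts with an input from a totally ordered set $V_{in}$ and must decide a value so that every decided value is some process's input and at most $k$ distinct values are decided; it is solvable on a model if some algorithm guarantees this, with all processes deciding after some fixed finite number of rounds, in every allowed execution and input assignment. $\mathrm{eqdom}(G)=\min\{i\in[1,n]:\forall P\subseteq\Pi,\ |P|=i\Rightarrow Out_G(P)=\Pi\}$ and $\mathrm{cov}_i(G)=\min_{P\subseteq\Pi,|P|=i}|Out_G(P)|$. The $i$-th covering numbers sequence of $G$ is defined by $s^i_1=\mathrm{cov}_i(G)$ and, for $k\ge1$, $s^i_{k+1}=n$ if $s^i_k\ge\mathrm{eqdom}(G)$, and $s^i_{k+1}=\mathrm{cov}_{s^i_k}(G)$ if $s^i_k<\mathrm{eqdom}(G)$.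 *)

theory Defs
  imports Main
begin

text \<open>Processes: the finite type 'p (so Pi = UNIV and n = card (UNIV::'p set)).
  A graph is a relation on 'p containing all self-loops.\<close>

definition is_graph :: "'p rel \<Rightarrow> bool" where
  "is_graph G \<longleftrightarrow> (\<forall>p. (p, p) \<in> G)"

definition Out :: "'p rel \<Rightarrow> 'p \<Rightarrow> 'p set" where
  "Out G p = {q. (p, q) \<in> G}"

definition In :: "'p rel \<Rightarrow> 'p \<Rightarrow> 'p set" where
  "In G p = {q. (q, p) \<in> G}"

definition OutSet :: "'p rel \<Rightarrow> 'p set \<Rightarrow> 'p set" where
  "OutSet G P = (\<Union>p\<in>P. Out G p)"

definition eqdom :: "('p::finite) rel \<Rightarrow> nat" where
  "eqdom G = (LEAST i. 1 \<le> i \<and> i \<le> card (UNIV::'p set) \<and>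
      (\<forall>P::'p set. card P = i \<longrightarrow> OutSet G P = UNIV))"

definition cov :: "('p::finite) rel \<Rightarrow> nat \<Rightarrow> nat" where
  "cov G i = Min {card (OutSet G P) | P::'p set. card P = i}"

text \<open>The i-th covering numbers sequence, indexed from 0:
  covseq G i k = s^i_(k+1).\<close>
fun covseq :: "('p::finite) rel \<Rightarrow> nat \<Rightarrow> nat \<Rightarrow> nat" where
  "covseq G i 0 = cov G i"
| "covseq G i (Suc k) =
     (if eqdom G \<le> covseq G i k then card (UNIV::'p set) else cov G (covseq G i k))"

text \<open>Up-closure: the round graphs allowed by the simple closed-above model
  generated by G.\<close>
definition up :: "'p rel \<Rightarrow> 'p rel set" where
  "up G = {H. is_graph H \<and> G \<subseteq> H}"

text \<open>Full-information local views. A deterministic algorithm in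
  failure-free communication-closed rounds is w.l.o.g. full-information:
  the local state after r rounds is a function of the local view.\<close>
datatype ('p, 'v) view =
    Init 'p 'v
  | Step "('p, 'v) view" "'p \<Rightarrow> ('p, 'v) view option"

text \<open>E r is the round graph of round r+1; x is the input assignment.\<close>
fun local_view :: "(nat \<Rightarrow> 'p rel) \<Rightarrow> ('p \<Rightarrow> 'v) \<Rightarrow> nat \<Rightarrow> 'p \<Rightarrow> ('p, 'v) view" where
  "local_view E x 0 p = Init p (x p)"
| "local_view E x (Suc r) p =
     Step (local_view E x r p)
          (\<lambda>q. if q \<in> In (E r) p then Some (local_view E x r q) else None)"

definition kset_solvable :: "'v set \<Rightarrow> nat \<Rightarrow> ('p::finite) rel \<Rightarrow> bool" where
  "kset_solvable Vin k G \<longleftrightarrow>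
     (\<exists>(R::nat) (\<delta> :: ('p, 'v) view \<Rightarrow> 'v).
        \<forall>(E :: nat \<Rightarrow> 'p rel) (x :: 'p \<Rightarrow> 'v).
          (\<forall>r. E r \<in> up G) \<longrightarrow> range x \<subseteq> Vin \<longrightarrow>
            (\<forall>p. \<delta> (local_view E x R p) \<in> range x) \<and>
            card (range (\<lambda>p. \<delta> (local_view E x R p))) \<le> k)"

end

theory Submission
  imports Defs
begin

primrec known :: "('p, 'v) view \<Rightarrow> 'v set" where
  "known (Init p v) = {v}"
| "known (Step w f) = known w \<union> (\<Union>q. case map_option known (f q) of None \<Rightarrow> {} | Some s \<Rightarrow> s)"

lemma known_lv: "known (local_view E x r p) \<subseteq> range x \<and> x p \<in> known (local_view E x r p)"
  apply (induction r arbitrary: p)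
   apply (auto split: if_splits)
  by blast

lemma known_lv_step:
  assumes "q \<in> In (E r) p"
  shows "known (local_view E x r q) \<subseteq> known (local_view E x (Suc r) p)"
  using assms by auto

lemma eqdom_props:
  fixes G :: "('p::finite) rel"
  assumes "is_graph G"
  shows "1 \<le> eqdom G \<and> eqdom G \<le> card (UNIV::'p set) \<and>
         (\<forall>P::'p set. card P = eqdom G \<longrightarrow> OutSet G P = UNIV)"
proof -
  let ?n = "card (UNIV::'p set)"
  have n1: "1 \<le> ?n" using finite_UNIV_card_ge_0[OF finite_UNIV] by (simp add: Suc_le_eq)
  have w: "1 \<le> ?n \<and> ?n \<le> ?n \<and> (\<forall>P::'p set. card P = ?n \<longrightarrow> OutSet G P = UNIV)"
  proof (intro conjI allI impI n1 le_refl)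
    fix P :: "'p set" assume "card P = ?n"
    then have "P = UNIV" by (metis card_subset_eq finite_UNIV subset_UNIV)
    then show "OutSet G P = UNIV" using assms
      by (auto simp: OutSet_def Out_def is_graph_def)
  qed
  have "1 \<le> eqdom G \<and> eqdom G \<le> ?n \<and> (\<forall>P::'p set. card P = eqdom G \<longrightarrow> OutSet G P = UNIV)"
    unfolding eqdom_def by (rule LeastI[of _ ?n], rule w)
  then show ?thesis .
qed

lemma cov_le:
  fixes G :: "('p::finite) rel"
  assumes "card P = m"
  shows "cov G m \<le> card (OutSet G P)"
proof -
  have "finite {card (OutSet G P) | P::'p set. card P = m}"
  proof (rule finite_subset)
    show "{card (OutSet G P) | P::'p set. card P = m} \<subseteq> (\<lambda>P. card (OutSet G P)) ` UNIV" by auto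
  qed simp
  then show ?thesis unfolding cov_def using assms by (intro Min_le) auto
qed

lemma covseq_bound:
  fixes G :: "('p::finite) rel" and S :: "nat \<Rightarrow> 'p set"
  assumes g: "is_graph G" and i: "1 \<le> i" "i \<le> card (UNIV::'p set)"
    and S0: "i \<le> card (S 0)"
    and step: "\<And>k. OutSet G (S k) \<subseteq> S (Suc k)"
  shows "covseq G i k \<le> card (S (Suc k))"
proof (induction k)
  case 0
  obtain P where P: "P \<subseteq> S 0" "card P = i"
    using S0 by (meson finite obtain_subset_with_card_n)
  have "cov G i \<le> card (OutSet G P)" by (rule cov_le[OF P(2)])
  also have "\<dots> \<le> card (OutSet G (S 0))"
    by (rule card_mono) (use P in \<open>auto simp: OutSet_def\<close>)
  also have "\<dots> \<le> card (S (Suc 0))" by (rule card_mono[OF _ step]) simp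
  finally show ?case by simp
next
  case (Suc k)
  note E = eqdom_props[OF g]
  show ?case
  proof (cases "eqdom G \<le> covseq G i k")
    case True
    obtain P where P: "P \<subseteq> S (Suc k)" "card P = eqdom G"
      using True Suc by (meson finite obtain_subset_with_card_n le_trans)
    have "OutSet G P = UNIV" using E P by blast
    moreover have "OutSet G P \<subseteq> S (Suc (Suc k))"
      using step[of "Suc k"] P by (auto simp: OutSet_def)
    ultimately have "S (Suc (Suc k)) = UNIV" by auto
    then show ?thesis using True by simp
  next
    case False
    obtain P where P: "P \<subseteq> S (Suc k)" "card P = covseq G i k"
      using Suc by (meson finite obtain_subset_with_card_n)
    have "cov G (covseq G i k) \<le> card (OutSet G P)" by (rule cov_le[OF P(2)])
    also have "\<dots> \<le> card (OutSet G (S (Suc k)))"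
      by (rule card_mono) (use P in \<open>auto simp: OutSet_def\<close>)
    also have "\<dots> \<le> card (S (Suc (Suc k)))" by (rule card_mono[OF _ step]) simp
    finally show ?thesis using False by simp
  qed
qed

lemma threshold:
  fixes V :: "'v::linorder set"
  assumes "finite V" "1 \<le> i" "i \<le> card V"
  shows "\<exists>v\<in>V. card {u\<in>V. u \<le> v} = i"
  using assms
proof (induction V rule: finite_linorder_max_induct)
  case empty then show ?case by simp
next
  case (insert b A)
  show ?case
  proof (cases "i = card (insert b A)")
    case True
    have "{u\<in>insert b A. u \<le> b} = insert b A" using insert by auto
    then show ?thesis using True by auto
  next
    case False
    then have "i \<le> card A" using insert by auto
    then obtain v where v: "v \<in> A" "card {u\<in>A. u \<le> v} = i" using insert by auto
    have "{u\<in>insert b A. u \<le> v} = {u\<in>A. u \<le> v}" using insert v by auto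
    then have "card {u\<in>insert b A. u \<le> v} = i" using v by simp
    then show ?thesis using v(1) by blast
  qed
qed

declare local_view.simps(2)[simp del]

theorem theorem9:
  fixes G :: "('p::finite) rel" and Vin :: "('v::linorder) set" and i :: nat
  assumes "is_graph G"
    and "1 \<le> i" and "i \<le> card (UNIV::'p set)"
    and "\<exists>j. covseq G i j = card (UNIV::'p set)"
  shows "kset_solvable Vin i G"
proof -
  obtain j where j: "covseq G i j = card (UNIV::'p set)" using assms(4) by blast
  let ?R = "Suc j"
  let ?d = "\<lambda>w::('p,'v) view. Min (known w)"
  have "\<forall>(E :: nat \<Rightarrow> 'p rel) (x :: 'p \<Rightarrow> 'v).
          (\<forall>r. E r \<in> up G) \<longrightarrow> range x \<subseteq> Vin \<longrightarrow>
            (\<forall>p. ?d (local_view E x ?R p) \<in> range x) \<and>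
            card (range (\<lambda>p. ?d (local_view E x ?R p))) \<le> i"
  proof (intro allI impI)
    fix E :: "nat \<Rightarrow> 'p rel" and x :: "'p \<Rightarrow> 'v"
    assume up: "\<forall>r. E r \<in> up G"
    have fin: "finite (known (local_view E x r p))" for r p
      by (rule finite_subset[OF conjunct1[OF known_lv[of E x r p]]]) simp
    have ne: "known (local_view E x r p) \<noteq> {}" for r p using known_lv[of E x r p] by auto
    have inr: "?d (local_view E x r p) \<in> range x" for r p
      using known_lv[of E x r p] Min_in[OF fin[of r p] ne[of r p]] by blast
    have cardd: "card (range (\<lambda>p. ?d (local_view E x ?R p))) \<le> i"
    proof (cases "card (range x) \<le> i")
      case True
      have "card (range (\<lambda>p. ?d (local_view E x ?R p))) \<le> card (range x)"
        by (rule card_mono) (use inr in auto)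
      then show ?thesis using True by simp
    next
      case False
      then obtain v where v: "v \<in> range x" "card {u\<in>range x. u \<le> v} = i"
        using threshold[of "range x" i] assms(2) by auto
      define S where "S k = {p. ?d (local_view E x k p) \<le> v}" for k
      have "x ` S 0 = {u\<in>range x. u \<le> v}" by (auto simp: S_def)
      then have S0: "i \<le> card (S 0)" using v card_image_le[of "S 0" x] by simp
      have step: "OutSet G (S k) \<subseteq> S (Suc k)" for k
      proof
        fix p assume "p \<in> OutSet G (S k)"
        then obtain q where q: "q \<in> S k" "(q, p) \<in> G" by (auto simp: OutSet_def Out_def)
        then have "q \<in> In (E k) p" using up by (auto simp: up_def In_def)
        then have sub: "known (local_view E x k q) \<subseteq> known (local_view E x (Suc k) p)"
          by (rule known_lv_step)
        have "?d (local_view E x (Suc k) p) \<le> ?d (local_view E x k q)"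
          by (rule Min_antimono[OF sub ne fin])
        then show "p \<in> S (Suc k)" using q by (auto simp: S_def)
      qed
      have "covseq G i j \<le> card (S ?R)"
        by (rule covseq_bound[OF assms(1) assms(2) assms(3) S0 step])
      then have "S ?R = UNIV" using j by (intro card_seteq) auto
      then have "range (\<lambda>p. ?d (local_view E x ?R p)) \<subseteq> {u\<in>range x. u \<le> v}"
        using inr by (auto simp: S_def)
      then show ?thesis using v card_mono[of "{u\<in>range x. u \<le> v}"] by simp
    qed
    show "(\<forall>p. ?d (local_view E x ?R p) \<in> range x) \<and>
            card (range (\<lambda>p. ?d (local_view E x ?R p))) \<le> i"
      using inr cardd by simp
  qed
  then show ?thesis unfolding kset_solvable_def by (intro exI[of _ ?R] exI[of _ ?d])
qed

end
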